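(* Let $\mu \in X^*(\underline{T})$ be a character. \begin{enumerate} \item $\Lambda_W^\mu$ is the set of $\omega'\in \Lambda_W$ such that $\mathrm{Trns}_{\mu}(\omega', \underline{A}) \in \underline{C}_0 / (p-\pi)X^0(\underline{T})$. In particular, $\mathrm{Trns}_{\mu}(\omega', \underline{A})$ is $p$-regular (since our alcoves are open). \item For any $a\in \mathcal{A}$ and $\omega'\in \Lambda_W^\mu$, the image of $\mathrm{Trns}'_\mu(\omega',a)$ in $\Lambda_W$ is $p$-regular, in the same $\widetilde{\underline{W}}^{\mathrm{der}}$-orbit (for the dot action) as $\omega'+\overline{\mu-\eta}$ and is in alcove $\pi^{-1}(a)$. Moreover, there exists $\widetilde{w}\in \underline{W}_a^{\mathrm{der}}$ such that \[ \mathrm{Trns}_\mu(\omega',a)\equiv \widetilde{w}\cdot \big(\mu-\eta+(1-p\pi^{-1})\circ\mathrm{sec}(\omega')\big)\ \mod (p-\pi)X^0(\underline{T}) \] (note that $\underline{W}_a^{\mathrm{der}}$ acts naturally via the $p$-dot action on $X^*(\underline{T})/(p-\pi)X^0(\underline{T})$). \item $(\mathrm{Trns}_\mu(\omega',a)-\mu+\eta)|_{\underline{Z}}=(\mathrm{Trns}_\mu(\omega',a)-\mu)|_{\underline{Z}}\in (p-\pi)X^*(\underline{Z})$. \end{enumerate}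
   Context: Let $\underline{G}=(\mathrm{Res}_{\mathbb{F}_{p^f}/\mathbb{F}_p}\mathrm{GL}_3)\times\mathbb{F}\cong\mathrm{GL}_3^f$ with diagonal torus $\underline T$ and center $\underline Z$, $X^*(\underline T)\cong(\mathbb{Z}^3)^f$, $\eta=((1,0,-1))_i$, $\pi$ the Frobenius shift $(\pi\lambda)_i=\lambda_{i-1}$. Let $\Lambda_W$, $\Lambda_R$ be the weight and root lattices of $\underline G^{\mathrm{der}}\cong\mathrm{SL}_3^f$, $\lambda\mapsto\overline\lambda$ the restriction $X^*(\underline T)\to\Lambda_W$ with kernel $X^0(\underline T)$, $\mathrm{can}:\Lambda_R\to\ker(X^*(\underline T)\to X^*(\underline Z))$ the canonical isomorphism (identifying $\underline W_a^{\mathrm{der}}$ with the affine Weyl group of $\underline G$), and $\mathrm{sec}:\Lambda_W\to X^*(\underline T)$ a fixed section. All actions of (extended) affine Weyl groups are $p$-dot actions $t_\lambda w\cdot\mu=p\lambda+w(\mu+\eta)-\eta$. $\underline{A}$ is the lowest dominant $p$-restricted alcove for $\mathrm{SL}_3^f$, $\underline C_0$ the lowest dominant alcove in $X^*(\underline T)\otimes\mathbb R$, $\mathcal A=\{A,B\}^f$ the dominant $p$-restricted alcoves, $\widetilde{\underline W}^{+,\mathrm{der}}_1$ the elements of $\Lambda_W\rtimes S_3^f$ taking $\underline A$ into $\mathcal A$ (written $wt_{-\pi^{-1}\omega}$). Every element of $\Lambda_W\times\mathcal A$ is uniquely $(\omega+\nu,\pi wt_{-\pi^{-1}\omega}\cdot\underline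 A)$ with $\nu\in\Lambda_R$, $wt_{-\pi^{-1}\omega}\in\widetilde{\underline W}^{+,\mathrm{der}}_1$, and one defines $\mathrm{Trns}'_\mu(\omega+\nu,\pi wt_{-\pi^{-1}\omega}\cdot\underline A)=wt_{-\pi^{-1}\mathrm{sec}(\omega)}\cdot(\mu-\eta+\mathrm{can}(\nu)+\mathrm{sec}(\omega))\in X^*(\underline T)$ and $\mathrm{Trns}_\mu$ its image in $X^*(\underline T)/(p-\pi)X^0(\underline T)$ (independent of $\mathrm{sec}$). $\Lambda_W^\mu=\{\omega\in\Lambda_W:\omega+\overline{\mu-\eta}\in\underline A\}$. A weight $\lambda$ is $p$-regular if $\langle\lambda+\eta,\alpha^\vee\rangle\notin p\mathbb{Z}$ for all positive roots $\alpha$. *)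

theory Defs
  imports Complex_Main "HOL-Combinatorics.Permutations" "HOL-Computational_Algebra.Primes"
begin

text \<open>A (possibly real) weight of the diagonal torus of GL_3^f is a function
  x :: nat => nat => 'a, where x i j (i < f, j < 3) is the j-th entry of the
  i-th GL_3 factor; entries outside this range are 0 (predicate wf).
  Integral weights (X^*(T)) have 'a = int; points of X^*(T) (x) R have 'a = real.\<close>

type_synonym 'a wt = "nat \<Rightarrow> nat \<Rightarrow> 'a"

definition wf :: "nat \<Rightarrow> 'a::zero wt \<Rightarrow> bool" where
  "wf f x \<longleftrightarrow> (\<forall>i j. (f \<le> i \<or> 3 \<le> j) \<longrightarrow> x i j = 0)"

definition Xstar :: "nat \<Rightarrow> int wt set" where
  "Xstar f = {x. wf f x}"

definition wadd :: "'a::ring_1 wt \<Rightarrow> 'a wt \<Rightarrow> 'a wt" where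
  "wadd x y = (\<lambda>i j. x i j + y i j)"

definition wsub :: "'a::ring_1 wt \<Rightarrow> 'a wt \<Rightarrow> 'a wt" where
  "wsub x y = (\<lambda>i j. x i j - y i j)"

definition wsmul :: "int \<Rightarrow> 'a::ring_1 wt \<Rightarrow> 'a wt" where
  "wsmul c x = (\<lambda>i j. of_int c * x i j)"

definition of_int_wt :: "int wt \<Rightarrow> 'a::ring_1 wt" where
  "of_int_wt x = (\<lambda>i j. of_int (x i j))"

definition eta :: "nat \<Rightarrow> 'a::ring_1 wt" where
  "eta f = (\<lambda>i j. if i < f \<and> j = 0 then 1 else if i < f \<and> j = 2 then -1 else 0)"

definition piF :: "nat \<Rightarrow> 'a::zero wt \<Rightarrow> 'a wt" where
  "piF f x = (\<lambda>i j. if i < f then x ((i + f - 1) mod f) j else 0)"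

definition piInv :: "nat \<Rightarrow> 'a::zero wt \<Rightarrow> 'a wt" where
  "piInv f x = (\<lambda>i j. if i < f then x ((i + 1) mod f) j else 0)"

text \<open>X^0(T): characters trivial on the derived subgroup, i.e. each component
  is a multiple of (1,1,1).\<close>
definition X0 :: "nat \<Rightarrow> int wt set" where
  "X0 f = {c. wf f c \<and> (\<forall>i. c i 0 = c i 1 \<and> c i 1 = c i 2)}"

definition cong_ppi :: "nat \<Rightarrow> nat \<Rightarrow> int wt \<Rightarrow> int wt \<Rightarrow> bool" where
  "cong_ppi p f x y \<longleftrightarrow> (\<exists>c\<in>X0 f. wsub x y = wsub (wsmul (int p) c) (piF f c))"

text \<open>Lambda_W = X^*(T)/X^0(T) is modelled by the normal forms: the unique
  representative of each class whose third entry in every component is 0.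
  bar is the restriction map X^*(T) -> Lambda_W.\<close>
definition LW :: "nat \<Rightarrow> int wt set" where
  "LW f = {x. wf f x \<and> (\<forall>i. x i 2 = 0)}"

definition bar :: "nat \<Rightarrow> int wt \<Rightarrow> int wt" where
  "bar f x = (\<lambda>i j. if i < f \<and> j < 3 then x i j - x i 2 else 0)"

definition LR :: "nat \<Rightarrow> int wt set" where
  "LR f = {x \<in> LW f. \<forall>i<f. (3::int) dvd (x i 0 + x i 1 + x i 2)}"

text \<open>can: Lambda_R -> ker(X^*(T) -> X^*(Z)), the sum-zero representative.\<close>
definition can :: "nat \<Rightarrow> int wt \<Rightarrow> int wt" where
  "can f x = (\<lambda>i j. if i < f \<and> j < 3 then x i j - (x i 0 + x i 1 + x i 2) div 3 else 0)"

definition is_section :: "nat \<Rightarrow> (int wt \<Rightarrow> int wt) \<Rightarrow> bool" where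
  "is_section f s \<longleftrightarrow> (\<forall>\<omega>\<in>LW f. s \<omega> \<in> Xstar f \<and> bar f (s \<omega>) = \<omega>)"

definition Weyl :: "nat \<Rightarrow> (nat \<Rightarrow> nat \<Rightarrow> nat) set" where
  "Weyl f = {w. (\<forall>i<f. w i permutes {0..<3}) \<and> (\<forall>i\<ge>f. w i = id)}"

definition wact :: "(nat \<Rightarrow> nat \<Rightarrow> nat) \<Rightarrow> 'a wt \<Rightarrow> 'a wt" where
  "wact w x = (\<lambda>i j. x i (w i j))"

definition dot :: "nat \<Rightarrow> nat \<Rightarrow> int wt \<Rightarrow> (nat \<Rightarrow> nat \<Rightarrow> nat) \<Rightarrow> 'a::ring_1 wt \<Rightarrow> 'a wt" where
  "dot p f \<nu> w x = (\<lambda>i j. if i < f \<and> j < 3 then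
      of_int (int p * \<nu> i j) + wact w (wadd x (eta f)) i j - eta f i j else 0)"

definition p_regular :: "nat \<Rightarrow> nat \<Rightarrow> int wt \<Rightarrow> bool" where
  "p_regular p f x \<longleftrightarrow> (\<forall>i<f. \<forall>a b. a < b \<and> b < 3 \<longrightarrow>
      \<not> (int p dvd (wadd x (eta f) i a - wadd x (eta f) i b)))"

datatype alc = AlcA | AlcB

text \<open>in_alc p f a x: x lies in the alcove a = (a_i)_i in {A,B}^f, where A is the
  lowest p-restricted alcove and B the upper one of SL_3:
  A: 0 < <x+eta,alpha^vee> < p for all positive roots;
  B: 0 < <x+eta,alpha_1^vee>, <x+eta,alpha_2^vee> < p < <x+eta,alpha_0^vee> < 2p.\<close>
definition in_alc :: "nat \<Rightarrow> nat \<Rightarrow> (nat \<Rightarrow> alc) \<Rightarrow> 'a::linordered_idom wt \<Rightarrow> bool" where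
  "in_alc p f a x \<longleftrightarrow> (\<forall>i<f.
     (let h = (\<lambda>k l. wadd x (eta f) i k - wadd x (eta f) i l) in
       0 < h 0 1 \<and> h 0 1 < of_nat p \<and> 0 < h 1 2 \<and> h 1 2 < of_nat p \<and>
       (if a i = AlcA then 0 < h 0 2 \<and> h 0 2 < of_nat p
        else of_nat p < h 0 2 \<and> h 0 2 < 2 * of_nat p)))"

definition in_C0 :: "nat \<Rightarrow> nat \<Rightarrow> 'a::linordered_idom wt \<Rightarrow> bool" where
  "in_C0 p f x \<longleftrightarrow> in_alc p f (\<lambda>_. AlcA) x"

definition alc_pi :: "nat \<Rightarrow> (nat \<Rightarrow> alc) \<Rightarrow> (nat \<Rightarrow> alc)" where
  "alc_pi f a = (\<lambda>i. if i < f then a ((i + f - 1) mod f) else AlcA)"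

definition alc_piInv :: "nat \<Rightarrow> (nat \<Rightarrow> alc) \<Rightarrow> (nat \<Rightarrow> alc)" where
  "alc_piInv f a = (\<lambda>i. if i < f then a ((i + 1) mod f) else AlcA)"

definition calA :: "nat \<Rightarrow> (nat \<Rightarrow> alc) set" where
  "calA f = {a. \<forall>i\<ge>f. a i = AlcA}"

text \<open>(omega, w) represents w t_{-pi^{-1} omega} in Lambda_W x| S_3^f; it lies in
  W~_1^{+,der} if it takes the real alcove A into some alcove of calA.\<close>
definition W1plus :: "nat \<Rightarrow> nat \<Rightarrow> (int wt \<times> (nat \<Rightarrow> nat \<Rightarrow> nat)) set" where
  "W1plus p f = {(\<omega>, w). \<omega> \<in> LW f \<and> w \<in> Weyl f \<and>
      (\<exists>b\<in>calA f. \<forall>x::real wt. wf f x \<and> in_alc p f (\<lambda>_. AlcA) x \<longrightarrow>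
          in_alc p f b (dot p f (wsmul (-1) (piInv f \<omega>)) w x))}"

text \<open>(omega', a) = (omega + nu, pi w t_{-pi^{-1} omega} . A).\<close>
definition is_decomp :: "nat \<Rightarrow> nat \<Rightarrow> int wt \<Rightarrow> (nat \<Rightarrow> alc) \<Rightarrow>
    int wt \<Rightarrow> int wt \<Rightarrow> (nat \<Rightarrow> nat \<Rightarrow> nat) \<Rightarrow> bool" where
  "is_decomp p f \<omega>' a \<omega> \<nu> w \<longleftrightarrow>
     \<nu> \<in> LR f \<and> (\<omega>, w) \<in> W1plus p f \<and> \<omega>' = wadd \<omega> \<nu> \<and>
     (\<forall>x::real wt. wf f x \<and> in_alc p f (\<lambda>_. AlcA) x \<longrightarrow>
          in_alc p f (alc_piInv f a) (dot p f (wsmul (-1) (piInv f \<omega>)) w x))"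

definition decomp :: "nat \<Rightarrow> nat \<Rightarrow> int wt \<Rightarrow> (nat \<Rightarrow> alc) \<Rightarrow>
    int wt \<times> int wt \<times> (nat \<Rightarrow> nat \<Rightarrow> nat)" where
  "decomp p f \<omega>' a = (THE (\<omega>, \<nu>, w). is_decomp p f \<omega>' a \<omega> \<nu> w)"

definition Trns' :: "nat \<Rightarrow> nat \<Rightarrow> (int wt \<Rightarrow> int wt) \<Rightarrow> int wt \<Rightarrow> int wt \<Rightarrow> (nat \<Rightarrow> alc) \<Rightarrow> int wt" where
  "Trns' p f sec \<mu> \<omega>' a = (case decomp p f \<omega>' a of (\<omega>, \<nu>, w) \<Rightarrow>
      dot p f (wsmul (-1) (piInv f (sec \<omega>))) w
        (wadd (wadd (wsub \<mu> (eta f)) (can f \<nu>)) (sec \<omega>)))"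

definition LWmu :: "nat \<Rightarrow> nat \<Rightarrow> int wt \<Rightarrow> int wt set" where
  "LWmu p f \<mu> = {\<omega> \<in> LW f. in_alc p f (\<lambda>_. AlcA) (wadd \<omega> (bar f (wsub \<mu> (eta f))))}"

definition resZ :: "nat \<Rightarrow> int wt \<Rightarrow> (nat \<Rightarrow> int)" where
  "resZ f x = (\<lambda>i. if i < f then x i 0 + x i 1 + x i 2 else 0)"

definition piZ :: "nat \<Rightarrow> (nat \<Rightarrow> int) \<Rightarrow> (nat \<Rightarrow> int)" where
  "piZ f z = (\<lambda>i. if i < f then z ((i + f - 1) mod f) else 0)"

end

theory Submission
  imports Defs
begin


definition galc :: "'a::linordered_idom \<Rightarrow> alc \<Rightarrow> 'a \<Rightarrow> 'a \<Rightarrow> 'a \<Rightarrow> bool" where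
  "galc P L h01 h12 h02 \<longleftrightarrow> 0<h01 \<and> h01<P \<and> 0<h12 \<and> h12<P \<and>
     (if L = AlcA then 0<h02 \<and> h02<P else P<h02 \<and> h02<2*P)"

lemma in_alc_iff: "in_alc p f L x \<longleftrightarrow> (\<forall>i<f. galc (of_nat p) (L i)
   (wadd x (eta f) i 0 - wadd x (eta f) i 1) (wadd x (eta f) i 1 - wadd x (eta f) i 2)
   (wadd x (eta f) i 0 - wadd x (eta f) i 2))"
  unfolding in_alc_def galc_def Let_def by simp

definition perm3 :: "nat \<Rightarrow> nat \<Rightarrow> nat \<Rightarrow> nat \<Rightarrow> nat" where
  "perm3 a b c = (\<lambda>j. if j = 0 then a else if j = 1 then b else if j = 2 then c else j)"

definition tabw :: "alc \<Rightarrow> int \<Rightarrow> nat \<Rightarrow> nat" where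
  "tabw L r = (if L = AlcA then (if r = 0 then perm3 0 1 2 else if r = 1 then perm3 2 0 1 else perm3 1 2 0)
               else (if r = 0 then perm3 2 1 0 else if r = 1 then perm3 1 0 2 else perm3 0 2 1))"

definition tabn :: "alc \<Rightarrow> int \<Rightarrow> nat \<Rightarrow> int" where
  "tabn L r j = (if j = 0 then (if L = AlcA then (if r = 0 then 0 else 1) else (if r = 0 then 2 else 1))
                 else if j = 1 then (if L = AlcA then (if r = 2 then 1 else 0) else (if r = 1 then 0 else 1))
                 else 0)"

lemma tab_real:
  fixes z :: "nat \<Rightarrow> real"
  assumes "r = 0 \<or> r = 1 \<or> r = 2" "galc P AlcA (z 0 - z 1) (z 1 - z 2) (z 0 - z 2)"
  shows "galc P L ((P * of_int (tabn L r 0) + z (tabw L r 0)) - (P * of_int (tabn L r 1) + z (tabw L r 1)))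
                  ((P * of_int (tabn L r 1) + z (tabw L r 1)) - (P * of_int (tabn L r 2) + z (tabw L r 2)))
                  ((P * of_int (tabn L r 0) + z (tabw L r 0)) - (P * of_int (tabn L r 2) + z (tabw L r 2)))"
  using assms by (cases L) (auto simp: galc_def tabn_def tabw_def perm3_def)

lemma tab_int:
  fixes z :: "nat \<Rightarrow> int"
  assumes "r = 0 \<or> r = 1 \<or> r = 2" "galc P AlcA (z 0 - z 1) (z 1 - z 2) (z 0 - z 2)"
  shows "galc P L ((P * of_int (tabn L r 0) + z (tabw L r 0)) - (P * of_int (tabn L r 1) + z (tabw L r 1)))
                  ((P * of_int (tabn L r 1) + z (tabw L r 1)) - (P * of_int (tabn L r 2) + z (tabw L r 2)))
                  ((P * of_int (tabn L r 0) + z (tabw L r 0)) - (P * of_int (tabn L r 2) + z (tabw L r 2)))"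
  using assms by (cases L) (auto simp: galc_def tabn_def tabw_def perm3_def)

lemma tab_inv:
  fixes z :: "nat \<Rightarrow> int"
  assumes "r = 0 \<or> r = 1 \<or> r = 2"
   "galc P AlcA ((P * of_int (tabn AlcA r 0) + z (tabw AlcA r 0)) - (P * of_int (tabn AlcA r 1) + z (tabw AlcA r 1)))
                  ((P * of_int (tabn AlcA r 1) + z (tabw AlcA r 1)) - (P * of_int (tabn AlcA r 2) + z (tabw AlcA r 2)))
                  ((P * of_int (tabn AlcA r 0) + z (tabw AlcA r 0)) - (P * of_int (tabn AlcA r 2) + z (tabw AlcA r 2)))"
  shows "galc P AlcA (z 0 - z 1) (z 1 - z 2) (z 0 - z 2)"
  using assms by (auto simp: galc_def tabn_def tabw_def perm3_def)

lemma tabw_lt: "j < 3 \<Longrightarrow> tabw L r j < 3"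
  by (auto simp: tabw_def perm3_def)
lemma tabw_ge: "3 \<le> j \<Longrightarrow> tabw L r j = j"
  by (auto simp: tabw_def perm3_def)
lemma tabw_sum: "g (tabw L r 0) + g (tabw L r 1) + g (tabw L r 2) = (g 0 + g 1 + g (2::nat) :: int)"
  by (auto simp: tabw_def perm3_def)
lemma tabn_cls: "r = 0 \<or> r = 1 \<or> r = 2 \<Longrightarrow> (tabn L r 0 + tabn L r 1) mod 3 = r"
  by (cases L) (auto simp: tabn_def)

lemma perm3_permutes:
  assumes "{a,b,c} = {0,1,2}" "a \<noteq> b" "a \<noteq> c" "b \<noteq> c"
  shows "perm3 a b c permutes {0..<3}"
proof (rule bij_imp_permutes)
  have e: "{0..<3::nat} = {0,1,2}" by auto
  show "bij_betw (perm3 a b c) {0..<3} {0..<3}"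
  proof -
    have "perm3 a b c ` {0,1,2} = {a,b,c}" by (auto simp add: perm3_def)
    moreover have "inj_on (perm3 a b c) {0,1,2}" using assms(2-4) by (simp add: perm3_def)
    ultimately show ?thesis unfolding bij_betw_def e using assms(1) by simp
  qed
  show "\<And>x. x \<notin> {0..<3} \<Longrightarrow> perm3 a b c x = x" by (auto simp: perm3_def)
qed

lemma tabw_permutes: "tabw L r permutes {0..<3}"
  unfolding tabw_def by (auto intro!: perm3_permutes)


lemma idx1: "1 \<le> f \<Longrightarrow> (i + 1) mod f < (f::nat)" by simp
lemma idx2: "1 \<le> f \<Longrightarrow> i < f \<Longrightarrow> ((i + f - 1) mod f + 1) mod f = (i::nat)"
proof (cases "i = 0")
  case True
  assume "1 \<le> f" "i < f"
  then show ?thesis using True by (simp add: Suc_diff_le)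
next
  case False
  assume a: "1 \<le> f" "i < f"
  then have "(i + f - 1) mod f = i - 1"
    using False by (metis Nat.add_diff_assoc2 add.commute le_add1 less_imp_diff_less mod_add_self2 mod_less not_gr0 One_nat_def Suc_leI)
  then show ?thesis using a False by simp
qed
lemma idx3: "1 \<le> f \<Longrightarrow> i < f \<Longrightarrow> ((i + 1) mod f + f - 1) mod f = (i::nat)"
proof (cases "i + 1 = f")
  case True
  assume "1 \<le> f" "i < f"
  then show ?thesis using True by simp
next
  case False
  assume a: "1 \<le> f" "i < f"
  then have "(i+1) mod f = i + 1" using False by simp
  then show ?thesis using a by simp
qed

lemma dot_eta: "i < f \<Longrightarrow> j < 3 \<Longrightarrow>
  wadd (dot p f \<nu> w x) (eta f) i j = of_int (int p * \<nu> i j) + wadd x (eta f) i (w i j)"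
  by (simp add: dot_def wadd_def wact_def)

definition samediff :: "nat \<Rightarrow> 'a::ring_1 wt \<Rightarrow> 'a wt \<Rightarrow> bool" where
  "samediff f x y \<longleftrightarrow> (\<forall>i<f. \<forall>j<3. x i j - y i j = x i 0 - y i 0)"

lemma samediff_h:
  assumes "samediff f x y" "i < f" "j < 3" "k < 3"
  shows "wadd x (eta f) i j - wadd x (eta f) i k = wadd y (eta f) i j - wadd y (eta f) i k"
proof -
  have "x i j - y i j = x i k - y i k" using assms unfolding samediff_def by metis
  then show ?thesis by (simp add: wadd_def algebra_simps)
qed

lemma samediff_in_alc:
  assumes "samediff f x y"
  shows "in_alc p f L x \<longleftrightarrow> in_alc p f L y"
  unfolding in_alc_iff using samediff_h[OF assms] by (auto simp del: One_nat_def)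

lemma samediff_sym: "samediff f x y \<Longrightarrow> samediff f y x"
  unfolding samediff_def by (metis minus_diff_eq)
lemma samediff_trans: "samediff f x y \<Longrightarrow> samediff f y z \<Longrightarrow> samediff f x z"
  unfolding samediff_def
proof (intro allI impI)
  fix i j assume h: "\<forall>i<f. \<forall>j<3. x i j - y i j = x i 0 - y i 0" "\<forall>i<f. \<forall>j<3. y i j - z i j = y i 0 - z i 0" "i < f" "j < (3::nat)"
  have "x i j - z i j = (x i j - y i j) + (y i j - z i j)" by simp
  also have "\<dots> = (x i 0 - y i 0) + (y i 0 - z i 0)"
  proof -
    have a1: "x i j - y i j = x i 0 - y i 0" using h(1)[rule_format, OF h(3) h(4)] .
    have a2: "y i j - z i j = y i 0 - z i 0" using h(2)[rule_format, OF h(3) h(4)] .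
    show ?thesis by (simp only: a1 a2)
  qed
  also have "\<dots> = x i 0 - z i 0" by simp
  finally show "x i j - z i j = x i 0 - z i 0" .
qed

lemma samediff_bar: "samediff f (bar f x) x"
  unfolding samediff_def bar_def by simp

lemma samediff_bar_eq:
  assumes "samediff f x y" "wf f x" "wf f y"
  shows "bar f x = bar f y"
proof (rule ext, rule ext)
  fix i j
  show "bar f x i j = bar f y i j"
  proof (cases "i < f \<and> j < 3")
    case True
    have sd: "\<forall>i<f. \<forall>j<3. x i j - y i j = x i 0 - y i 0" using assms(1) unfolding samediff_def .
    have "x i j - y i j = x i 0 - y i 0" "x i 2 - y i 2 = x i 0 - y i 0"
      using sd[rule_format, of i j] sd[rule_format, of i 2] True by auto
    then have "x i j - y i j = x i 2 - y i 2" by simp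
    then show ?thesis using True by (simp add: bar_def algebra_simps)
  qed (auto simp: bar_def)
qed

lemma cong_samediff: "cong_ppi p f x y \<Longrightarrow> samediff f x y"
  unfolding cong_ppi_def samediff_def
proof (elim bexE, intro allI impI)
  fix c i j assume c: "c \<in> X0 f" and e: "wsub x y = wsub (wsmul (int p) c) (piF f c)" and ij: "i < f" "j < (3::nat)"
  have cc: "c k j = c k 0" for k
  proof -
    have "c k 0 = c k 1" "c k 1 = c k 2" using c unfolding X0_def by auto
    moreover have "j = 0 \<or> j = 1 \<or> j = 2" using ij by auto
    ultimately show ?thesis by auto
  qed
  have "x i j - y i j = wsub (wsmul (int p) c) (piF f c) i j" using e by (simp add: wsub_def fun_eq_iff)
  also have "\<dots> = wsub (wsmul (int p) c) (piF f c) i 0" using ij by (simp add: wsub_def wsmul_def piF_def cc)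
  also have "\<dots> = x i 0 - y i 0" using e by (simp add: wsub_def fun_eq_iff)
  finally show "x i j - y i j = x i 0 - y i 0" .
qed

lemma galc_notdvd:
  fixes P :: int
  assumes "galc P L a b c" "P = int p"
  shows "\<not> P dvd a \<and> \<not> P dvd b \<and> \<not> P dvd c"
proof -
  have nd: "\<not> P dvd x" if "0 < x" "x < P" for x using that zdvd_not_zless by blast
  have nd2: "\<not> P dvd x" if "P < x" "x < 2*P" for x
  proof
    assume "P dvd x" then obtain k where "x = P * k" by blast
    have P0: "0 < P" using that by simp
    have "P * 1 < P * k" "P * k < P * 2" using that \<open>x = P * k\<close> by (simp_all add: mult.commute)
    then have "1 < k" "k < 2" using P0 by (simp_all add: mult_less_cancel_left)
    then show False by simp
  qed
  show ?thesis using assms(1) nd nd2 unfolding galc_def by (auto split: if_splits)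
qed

lemma in_alc_preg: "in_alc p f L (x::int wt) \<Longrightarrow> p_regular p f x"
  unfolding p_regular_def
proof (intro allI impI)
  fix i a b :: nat assume h: "in_alc p f L x" "i < f" "a < b \<and> b < 3"
  then have g: "galc (int p) (L i) (wadd x (eta f) i 0 - wadd x (eta f) i 1) (wadd x (eta f) i 1 - wadd x (eta f) i 2)
   (wadd x (eta f) i 0 - wadd x (eta f) i 2)" unfolding in_alc_iff by blast
  have "(a = 0 \<and> b = 1) \<or> (a = 0 \<and> b = 2) \<or> (a = 1 \<and> b = 2)" using h(3) by auto
  moreover note nd = galc_notdvd[OF g refl]
  ultimately show "\<not> int p dvd wadd x (eta f) i a - wadd x (eta f) i b"
    by (elim disjE conjE) (simp only: not_False_eq_True)+
qed


lemma bridge1: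
  fixes P u v :: real assumes "0 < P"
  shows "(0 < P/4*u - P/4*v \<longleftrightarrow> v < u)" "(P/4*u - P/4*v < P \<longleftrightarrow> u - v < 4)"
        "(P < P/4*u - P/4*v \<longleftrightarrow> 4 < u - v)" "(P/4*u - P/4*v < 2*P \<longleftrightarrow> u - v < 8)"
proof -
  have e: "P/4*u - P/4*v = (P/4) * (u - v)" by (simp add: algebra_simps)
  have q: "0 < P/4" using assms by simp
  have P: "P = (P/4) * 4" "2 * P = (P/4)*8" by simp_all
  show "(0 < P/4*u - P/4*v \<longleftrightarrow> v < u)" unfolding e using q by (simp add: zero_less_mult_iff)
  show "(P/4*u - P/4*v < P \<longleftrightarrow> u - v < 4)" unfolding e
    by (subst P(1)) (use q in \<open>simp only: mult_less_cancel_left_pos\<close>)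
  show "(P < P/4*u - P/4*v \<longleftrightarrow> 4 < u - v)" unfolding e
    by (subst P(1)) (use q in \<open>simp only: mult_less_cancel_left_pos\<close>)
  show "(P/4*u - P/4*v < 2*P \<longleftrightarrow> u - v < 8)" unfolding e
    by (subst P(2)) (use q in \<open>simp only: mult_less_cancel_left_pos\<close>)
qed

lemma bridge:
  fixes P :: real and a b c :: int
  assumes "0 < P" "galc P L (P/4*of_int a - P/4*of_int b) (P/4*of_int b - P/4*of_int c) (P/4*of_int a - P/4*of_int c)"
  shows "galc (4::int) L (a - b) (b - c) (a - c)"
proof -
  note B = bridge1[OF assms(1)]
  have "of_int b < (of_int a::real) \<longleftrightarrow> b < a" "of_int a - of_int b < (4::real) \<longleftrightarrow> a - b < 4"
       "4 < (of_int a - of_int b::real) \<longleftrightarrow> 4 < a - b" "of_int a - of_int b < (8::real) \<longleftrightarrow> a - b < 8" for a b :: int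
    by linarith+
  then show ?thesis using assms(2) unfolding galc_def B by (auto split: if_splits)
qed

lemma perm_cases:
  fixes s :: "nat \<Rightarrow> nat"
  assumes "s permutes {0..<3}"
  shows "(s 0 = 0 \<and> s 1 = 1 \<and> s 2 = 2) \<or> (s 0 = 0 \<and> s 1 = 2 \<and> s 2 = 1) \<or>
         (s 0 = 1 \<and> s 1 = 0 \<and> s 2 = 2) \<or> (s 0 = 1 \<and> s 1 = 2 \<and> s 2 = 0) \<or>
         (s 0 = 2 \<and> s 1 = 0 \<and> s 2 = 1) \<or> (s 0 = 2 \<and> s 1 = 1 \<and> s 2 = 0)"
proof -
  have r: "s j < 3" if "j < 3" for j using permutes_in_image[OF assms, of j] that by simp
  have i: "s j \<noteq> s k" if "j \<noteq> k" for j k using permutes_inj[OF assms] that by (metis injD)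
  have "s 0 < 3" "s 1 < 3" "s 2 < 3" using r by simp_all
  then have a: "s 0 = 0 \<or> s 0 = 1 \<or> s 0 = 2" and b: "s 1 = 0 \<or> s 1 = 1 \<or> s 1 = 2"
    and c: "s 2 = 0 \<or> s 2 = 1 \<or> s 2 = 2" by presburger+
  have d: "s 0 \<noteq> s 1" "s 0 \<noteq> s 2" "s 1 \<noteq> s 2" using i by simp_all
  show ?thesis using a b c d by (elim disjE; simp)
qed

definition zA :: "nat \<Rightarrow> int" where "zA j = (if j = 0 then 2 else if j = 1 then 1 else 0)"
definition zB :: "nat \<Rightarrow> int" where "zB j = (if j = 0 then 3 else if j = 1 then 1 else 0)"
definition zC :: "nat \<Rightarrow> int" where "zC j = (if j = 0 then 3 else if j = 1 then 2 else 0)"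

lemma classify_int:
  fixes n0 n1 :: int and s :: "nat \<Rightarrow> nat"
  assumes "s permutes {0..<3}"
   "galc (4::int) L ((4*n0 + zA (s 0)) - (4*n1 + zA (s 1))) ((4*n1 + zA (s 1)) - (0 + zA (s 2))) ((4*n0 + zA (s 0)) - (0 + zA (s 2)))"
   "galc (4::int) L ((4*n0 + zB (s 0)) - (4*n1 + zB (s 1))) ((4*n1 + zB (s 1)) - (0 + zB (s 2))) ((4*n0 + zB (s 0)) - (0 + zB (s 2)))"
   "galc (4::int) L ((4*n0 + zC (s 0)) - (4*n1 + zC (s 1))) ((4*n1 + zC (s 1)) - (0 + zC (s 2))) ((4*n0 + zC (s 0)) - (0 + zC (s 2)))"
  shows "n0 = tabn L ((n0 + n1) mod 3) 0 \<and> n1 = tabn L ((n0 + n1) mod 3) 1 \<and>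
         s 0 = tabw L ((n0 + n1) mod 3) 0 \<and> s 1 = tabw L ((n0 + n1) mod 3) 1 \<and> s 2 = tabw L ((n0 + n1) mod 3) 2"
  using perm_cases[OF assms(1)] assms(2-4)
  apply (elim disjE conjE; cases L)
  apply (simp_all add: galc_def zA_def zB_def zC_def tabn_def tabw_def perm3_def)
  apply presburger
  done


definition rT :: "int wt \<Rightarrow> nat \<Rightarrow> int" where "rT \<omega>' k = (-(\<omega>' k 0 + \<omega>' k 1)) mod 3"
definition omT :: "nat \<Rightarrow> (nat \<Rightarrow> alc) \<Rightarrow> int wt \<Rightarrow> int wt" where
  "omT f a \<omega>' = (\<lambda>k j. if k < f \<and> j < 2 then - tabn (a k) (rT \<omega>' k) j else 0)"
definition wwT :: "nat \<Rightarrow> (nat \<Rightarrow> alc) \<Rightarrow> int wt \<Rightarrow> nat \<Rightarrow> nat \<Rightarrow> nat" where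
  "wwT f a \<omega>' = (\<lambda>i. if i < f then tabw (a ((i+1) mod f)) (rT \<omega>' ((i+1) mod f)) else id)"
definition nuT :: "nat \<Rightarrow> (nat \<Rightarrow> alc) \<Rightarrow> int wt \<Rightarrow> int wt" where
  "nuT f a \<omega>' = wsub \<omega>' (omT f a \<omega>')"

lemma rT_range: "rT \<omega>' k = 0 \<or> rT \<omega>' k = 1 \<or> rT \<omega>' k = 2"
  unfolding rT_def by presburger

lemma tv_val: "1 \<le> f \<Longrightarrow> i < f \<Longrightarrow> j < 3 \<Longrightarrow>
  wsmul (-1) (piInv f (omT f a \<omega>')) i j = tabn (a ((i+1) mod f)) (rT \<omega>' ((i+1) mod f)) j"
  by (auto simp: wsmul_def piInv_def omT_def tabn_def)

lemma map_real:
  fixes x :: "real wt"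
  assumes "i < f" "\<forall>j<3. \<nu> i j = tabn L r j" "w i = tabw L r" "r = 0 \<or> r = 1 \<or> r = 2"
    "galc (real p) AlcA (wadd x (eta f) i 0 - wadd x (eta f) i 1) (wadd x (eta f) i 1 - wadd x (eta f) i 2)
       (wadd x (eta f) i 0 - wadd x (eta f) i 2)"
  shows "galc (real p) L (wadd (dot p f \<nu> w x) (eta f) i 0 - wadd (dot p f \<nu> w x) (eta f) i 1)
     (wadd (dot p f \<nu> w x) (eta f) i 1 - wadd (dot p f \<nu> w x) (eta f) i 2)
     (wadd (dot p f \<nu> w x) (eta f) i 0 - wadd (dot p f \<nu> w x) (eta f) i 2)"
proof -
  have e: "wadd (dot p f \<nu> w x) (eta f) i j = real p * of_int (tabn L r j) + wadd x (eta f) i (tabw L r j)"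
    if "j < 3" for j
    using dot_eta[OF assms(1) that, of p \<nu> w x] assms(2,3) that by simp
  have e0: "wadd (dot p f \<nu> w x) (eta f) i 0 = real p * of_int (tabn L r 0) + wadd x (eta f) i (tabw L r 0)" using e[of 0] by simp
  have e1: "wadd (dot p f \<nu> w x) (eta f) i 1 = real p * of_int (tabn L r 1) + wadd x (eta f) i (tabw L r 1)" using e[of 1] by simp
  have e2: "wadd (dot p f \<nu> w x) (eta f) i 2 = real p * of_int (tabn L r 2) + wadd x (eta f) i (tabw L r 2)" using e[of 2] by simp
  show ?thesis unfolding e0 e1 e2
    by (rule tab_real[OF assms(4,5)])
qed

lemma map_int:
  fixes x :: "int wt"
  assumes "i < f" "\<forall>j<3. \<nu> i j = tabn L r j" "w i = tabw L r" "r = 0 \<or> r = 1 \<or> r = 2"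
    "galc (int p) AlcA (wadd x (eta f) i 0 - wadd x (eta f) i 1) (wadd x (eta f) i 1 - wadd x (eta f) i 2)
       (wadd x (eta f) i 0 - wadd x (eta f) i 2)"
  shows "galc (int p) L (wadd (dot p f \<nu> w x) (eta f) i 0 - wadd (dot p f \<nu> w x) (eta f) i 1)
     (wadd (dot p f \<nu> w x) (eta f) i 1 - wadd (dot p f \<nu> w x) (eta f) i 2)
     (wadd (dot p f \<nu> w x) (eta f) i 0 - wadd (dot p f \<nu> w x) (eta f) i 2)"
proof -
  have e: "wadd (dot p f \<nu> w x) (eta f) i j = int p * of_int (tabn L r j) + wadd x (eta f) i (tabw L r j)"
    if "j < 3" for j
    using dot_eta[OF assms(1) that, of p \<nu> w x] assms(2,3) that by simp
  have e0: "wadd (dot p f \<nu> w x) (eta f) i 0 = int p * of_int (tabn L r 0) + wadd x (eta f) i (tabw L r 0)" using e[of 0] by simp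
  have e1: "wadd (dot p f \<nu> w x) (eta f) i 1 = int p * of_int (tabn L r 1) + wadd x (eta f) i (tabw L r 1)" using e[of 1] by simp
  have e2: "wadd (dot p f \<nu> w x) (eta f) i 2 = int p * of_int (tabn L r 2) + wadd x (eta f) i (tabw L r 2)" using e[of 2] by simp
  show ?thesis unfolding e0 e1 e2
    by (rule tab_int[OF assms(4,5)])
qed

lemma inv_int:
  fixes x :: "int wt"
  assumes "i < f" "\<forall>j<3. \<nu> i j = tabn AlcA r j" "w i = tabw AlcA r" "r = 0 \<or> r = 1 \<or> r = 2"
    "galc (int p) AlcA (wadd (dot p f \<nu> w x) (eta f) i 0 - wadd (dot p f \<nu> w x) (eta f) i 1)
     (wadd (dot p f \<nu> w x) (eta f) i 1 - wadd (dot p f \<nu> w x) (eta f) i 2)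
     (wadd (dot p f \<nu> w x) (eta f) i 0 - wadd (dot p f \<nu> w x) (eta f) i 2)"
  shows "galc (int p) AlcA (wadd x (eta f) i 0 - wadd x (eta f) i 1) (wadd x (eta f) i 1 - wadd x (eta f) i 2)
       (wadd x (eta f) i 0 - wadd x (eta f) i 2)"
proof -
  have e: "wadd (dot p f \<nu> w x) (eta f) i j = int p * of_int (tabn AlcA r j) + wadd x (eta f) i (tabw AlcA r j)"
    if "j < 3" for j
    using dot_eta[OF assms(1) that, of p \<nu> w x] assms(2,3) that by simp
  have e0: "wadd (dot p f \<nu> w x) (eta f) i 0 = int p * of_int (tabn AlcA r 0) + wadd x (eta f) i (tabw AlcA r 0)" using e[of 0] by simp
  have e1: "wadd (dot p f \<nu> w x) (eta f) i 1 = int p * of_int (tabn AlcA r 1) + wadd x (eta f) i (tabw AlcA r 1)" using e[of 1] by simp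
  have e2: "wadd (dot p f \<nu> w x) (eta f) i 2 = int p * of_int (tabn AlcA r 2) + wadd x (eta f) i (tabw AlcA r 2)" using e[of 2] by simp
  show ?thesis
    using assms(5) unfolding e0 e1 e2
    by (rule tab_inv[OF assms(4), of "int p" "\<lambda>m. wadd x (eta f) i m"])
qed


lemma omT_LW: "omT f a \<omega>' \<in> LW f"
  unfolding LW_def wf_def omT_def by auto

lemma wwT_Weyl: "wwT f a \<omega>' \<in> Weyl f"
  unfolding Weyl_def wwT_def by (auto intro: tabw_permutes)

lemma nuT_LR:
  assumes "\<omega>' \<in> LW f"
  shows "nuT f a \<omega>' \<in> LR f"
proof -
  have w: "wf f \<omega>'" "\<And>i. \<omega>' i 2 = 0" using assms unfolding LW_def by auto
  have "nuT f a \<omega>' \<in> LW f"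
    using w unfolding LW_def wf_def nuT_def wsub_def omT_def by auto
  moreover have "3 dvd (nuT f a \<omega>' i 0 + nuT f a \<omega>' i 1 + nuT f a \<omega>' i 2)" if "i < f" for i
  proof -
    have c: "(tabn (a i) (rT \<omega>' i) 0 + tabn (a i) (rT \<omega>' i) 1) mod 3 = rT \<omega>' i"
      by (rule tabn_cls[OF rT_range])
    have s: "nuT f a \<omega>' i 0 + nuT f a \<omega>' i 1 + nuT f a \<omega>' i 2
        = \<omega>' i 0 + \<omega>' i 1 + (tabn (a i) (rT \<omega>' i) 0 + tabn (a i) (rT \<omega>' i) 1)"
      using that w(2)[of i] by (simp add: nuT_def wsub_def omT_def)
    show ?thesis unfolding s using c unfolding rT_def by presburger
  qed
  ultimately show ?thesis unfolding LR_def by auto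
qed

lemma map_prop:
  assumes "1 \<le> f"
  shows "\<forall>x::real wt. wf f x \<and> in_alc p f (\<lambda>_. AlcA) x \<longrightarrow>
          in_alc p f (alc_piInv f a) (dot p f (wsmul (-1) (piInv f (omT f a \<omega>'))) (wwT f a \<omega>') x)"
proof (intro allI impI)
  fix x :: "real wt" assume h: "wf f x \<and> in_alc p f (\<lambda>_. AlcA) x"
  show "in_alc p f (alc_piInv f a) (dot p f (wsmul (-1) (piInv f (omT f a \<omega>'))) (wwT f a \<omega>') x)"
    unfolding in_alc_iff
  proof (intro allI impI)
    fix i assume i: "i < f"
    have g: "galc (real p) AlcA (wadd x (eta f) i 0 - wadd x (eta f) i 1) (wadd x (eta f) i 1 - wadd x (eta f) i 2)
       (wadd x (eta f) i 0 - wadd x (eta f) i 2)" using h i unfolding in_alc_iff by auto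
    have "galc (real p) (a ((i+1) mod f)) (wadd (dot p f (wsmul (-1) (piInv f (omT f a \<omega>'))) (wwT f a \<omega>') x) (eta f) i 0 - wadd (dot p f (wsmul (-1) (piInv f (omT f a \<omega>'))) (wwT f a \<omega>') x) (eta f) i 1)
     (wadd (dot p f (wsmul (-1) (piInv f (omT f a \<omega>'))) (wwT f a \<omega>') x) (eta f) i 1 - wadd (dot p f (wsmul (-1) (piInv f (omT f a \<omega>'))) (wwT f a \<omega>') x) (eta f) i 2)
     (wadd (dot p f (wsmul (-1) (piInv f (omT f a \<omega>'))) (wwT f a \<omega>') x) (eta f) i 0 - wadd (dot p f (wsmul (-1) (piInv f (omT f a \<omega>'))) (wwT f a \<omega>') x) (eta f) i 2)"
      apply (rule map_real[OF i _ _ rT_range g])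
      using tv_val[OF assms i] apply blast
      using i by (simp add: wwT_def)
    then show "galc (of_nat p) (alc_piInv f a i) (wadd (dot p f (wsmul (-1) (piInv f (omT f a \<omega>'))) (wwT f a \<omega>') x) (eta f) i 0 - wadd (dot p f (wsmul (-1) (piInv f (omT f a \<omega>'))) (wwT f a \<omega>') x) (eta f) i 1)
     (wadd (dot p f (wsmul (-1) (piInv f (omT f a \<omega>'))) (wwT f a \<omega>') x) (eta f) i 1 - wadd (dot p f (wsmul (-1) (piInv f (omT f a \<omega>'))) (wwT f a \<omega>') x) (eta f) i 2)
     (wadd (dot p f (wsmul (-1) (piInv f (omT f a \<omega>'))) (wwT f a \<omega>') x) (eta f) i 0 - wadd (dot p f (wsmul (-1) (piInv f (omT f a \<omega>'))) (wwT f a \<omega>') x) (eta f) i 2)"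
      using i by (simp add: alc_piInv_def)
  qed
qed

lemma explicit_decomp:
  assumes "1 \<le> f" "\<omega>' \<in> LW f"
  shows "is_decomp p f \<omega>' a (omT f a \<omega>') (nuT f a \<omega>') (wwT f a \<omega>')"
proof -
  have b: "alc_piInv f a \<in> calA f" unfolding calA_def alc_piInv_def by auto
  have "(omT f a \<omega>', wwT f a \<omega>') \<in> W1plus p f"
    unfolding W1plus_def using omT_LW wwT_Weyl b map_prop[OF assms(1)] by blast
  moreover have "\<omega>' = wadd (omT f a \<omega>') (nuT f a \<omega>')"
    by (simp add: wadd_def nuT_def wsub_def)
  ultimately show ?thesis unfolding is_decomp_def using nuT_LR[OF assms(2)] map_prop[OF assms(1)] by blast
qed


definition tx :: "nat \<Rightarrow> nat \<Rightarrow> (nat \<Rightarrow> int) \<Rightarrow> real wt" where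
  "tx p f z = (\<lambda>i j. if i < f \<and> j < 3 then real p / 4 * of_int (z j) - eta f i j else 0)"

lemma tx_wf: "wf f (tx p f z)" unfolding wf_def tx_def by auto

lemma tx_Z: "i < f \<Longrightarrow> j < 3 \<Longrightarrow> wadd (tx p f z) (eta f) i j = real p / 4 * of_int (z j)"
  unfolding tx_def wadd_def by simp

lemma tx_alc:
  assumes "0 < p" "z = zA \<or> z = zB \<or> z = zC"
  shows "in_alc p f (\<lambda>_. AlcA) (tx p f z)"
  unfolding in_alc_iff
proof (intro allI impI)
  fix i assume i: "i < f"
  have P: "0 < real p" using assms(1) by simp
  show "galc (of_nat p) AlcA (wadd (tx p f z) (eta f) i 0 - wadd (tx p f z) (eta f) i 1)
         (wadd (tx p f z) (eta f) i 1 - wadd (tx p f z) (eta f) i 2) (wadd (tx p f z) (eta f) i 0 - wadd (tx p f z) (eta f) i 2)"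
  proof -
    have T0: "wadd (tx p f z) (eta f) i 0 = real p / 4 * of_int (z 0)" using tx_Z[OF i, of 0] by simp
    have T1: "wadd (tx p f z) (eta f) i 1 = real p / 4 * of_int (z 1)" using tx_Z[OF i, of 1] by simp
    have T2: "wadd (tx p f z) (eta f) i 2 = real p / 4 * of_int (z 2)" using tx_Z[OF i, of 2] by simp
    show ?thesis unfolding T0 T1 T2
      using assms(2) P by (auto simp: galc_def zA_def zB_def zC_def)
  qed
qed

lemma classify_decomp:
  assumes d: "is_decomp p f \<omega>' a \<omega> \<nu> w" and p: "0 < p" and f: "1 \<le> f" and i: "i < f"
  shows "(\<forall>j<3. wsmul (-1) (piInv f \<omega>) i j = tabn (a ((i+1) mod f)) (rT \<omega>' ((i+1) mod f)) j)
       \<and> w i = tabw (a ((i+1) mod f)) (rT \<omega>' ((i+1) mod f))"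
proof -
  from d have nuLR: "\<nu> \<in> LR f" and W1: "(\<omega>, w) \<in> W1plus p f" and eq: "\<omega>' = wadd \<omega> \<nu>"
    and M: "\<forall>x::real wt. wf f x \<and> in_alc p f (\<lambda>_. AlcA) x \<longrightarrow>
          in_alc p f (alc_piInv f a) (dot p f (wsmul (-1) (piInv f \<omega>)) w x)"
    unfolding is_decomp_def by auto
  from W1 have omLW: "\<omega> \<in> LW f" and wW: "w \<in> Weyl f" unfolding W1plus_def by auto
  define k where "k = (i+1) mod f"
  have k: "k < f" unfolding k_def using f by simp
  define n where "n j = wsmul (-1) (piInv f \<omega>) i j" for j
  have nval: "n j = - \<omega> k j" for j unfolding n_def k_def wsmul_def piInv_def using i by simp
  have n2: "n 2 = 0" using omLW unfolding nval LW_def by simp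
  have sig: "w i permutes {0..<3}" using wW i unfolding Weyl_def by auto
  have slt: "w i j < 3" if "j < 3" for j using permutes_in_image[OF sig, of j] that by simp
  have step: "galc (4::int) (a k) ((4 * n 0 + z (w i 0)) - (4 * n 1 + z (w i 1)))
       ((4 * n 1 + z (w i 1)) - (4 * n 2 + z (w i 2))) ((4 * n 0 + z (w i 0)) - (4 * n 2 + z (w i 2)))"
    if z: "z = zA \<or> z = zB \<or> z = zC" for z
  proof -
    let ?X = "dot p f (wsmul (-1) (piInv f \<omega>)) w (tx p f z)"
    have al: "in_alc p f (alc_piInv f a) ?X" using M tx_wf tx_alc[OF p z] by blast
    have g: "galc (real p) (a k) (wadd ?X (eta f) i 0 - wadd ?X (eta f) i 1) (wadd ?X (eta f) i 1 - wadd ?X (eta f) i 2)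
       (wadd ?X (eta f) i 0 - wadd ?X (eta f) i 2)"
      using al i unfolding in_alc_iff by (auto simp: alc_piInv_def k_def)
    have W: "wadd ?X (eta f) i j = real p / 4 * of_int (4 * n j + z (w i j))" if "j < 3" for j
      using dot_eta[OF i that, of p "wsmul (-1) (piInv f \<omega>)" w "tx p f z"] tx_Z[OF i slt[OF that], of p z] that
      unfolding n_def by (simp add: algebra_simps)
    have W0: "wadd ?X (eta f) i 0 = real p / 4 * of_int (4 * n 0 + z (w i 0))" using W[of 0] by simp
    have W1: "wadd ?X (eta f) i 1 = real p / 4 * of_int (4 * n 1 + z (w i 1))" using W[of 1] by simp
    have W2: "wadd ?X (eta f) i 2 = real p / 4 * of_int (4 * n 2 + z (w i 2))" using W[of 2] by simp
    show ?thesis using bridge[of "real p", OF _ g[unfolded W0 W1 W2]] p by simp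
  qed
  have c: "n 0 = tabn (a k) ((n 0 + n 1) mod 3) 0 \<and> n 1 = tabn (a k) ((n 0 + n 1) mod 3) 1 \<and>
         w i 0 = tabw (a k) ((n 0 + n 1) mod 3) 0 \<and> w i 1 = tabw (a k) ((n 0 + n 1) mod 3) 1 \<and> w i 2 = tabw (a k) ((n 0 + n 1) mod 3) 2"
    apply (rule classify_int[OF sig])
    using step[of zA] step[of zB] step[of zC] n2 by simp_all
  have r: "(n 0 + n 1) mod 3 = rT \<omega>' k"
  proof -
    have "3 dvd (\<nu> k 0 + \<nu> k 1 + \<nu> k 2)" "\<nu> k 2 = 0" using nuLR k unfolding LR_def LW_def by auto
    moreover have "\<omega>' k 0 = \<omega> k 0 + \<nu> k 0" "\<omega>' k 1 = \<omega> k 1 + \<nu> k 1" using eq by (simp_all add: wadd_def)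
    ultimately show ?thesis unfolding rT_def nval by presburger
  qed
  have A1: "\<forall>j<3. n j = tabn (a k) (rT \<omega>' k) j"
  proof (intro allI impI)
    fix j :: nat assume "j < 3"
    then have "j = 0 \<or> j = 1 \<or> j = 2" by auto
    moreover have "n 0 = tabn (a k) (rT \<omega>' k) 0" "n 1 = tabn (a k) (rT \<omega>' k) 1" using c unfolding r by simp_all
    moreover have "n 2 = tabn (a k) (rT \<omega>' k) 2" using n2 by (simp add: tabn_def)
    ultimately show "n j = tabn (a k) (rT \<omega>' k) j" by auto
  qed
  have A2: "w i = tabw (a k) (rT \<omega>' k)"
  proof
    fix j
    show "w i j = tabw (a k) (rT \<omega>' k) j"
    proof (cases "j < 3")
      case True
      then have "j = 0 \<or> j = 1 \<or> j = 2" by auto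
      moreover have "w i 0 = tabw (a k) (rT \<omega>' k) 0" "w i 1 = tabw (a k) (rT \<omega>' k) 1"
         "w i 2 = tabw (a k) (rT \<omega>' k) 2" using c unfolding r by simp_all
      ultimately show ?thesis by auto
    next
      case False
      then have "j \<notin> {0..<3}" by simp
      then show ?thesis using permutes_not_in[OF sig] False tabw_ge by simp
    qed
  qed
  show ?thesis using A1 A2 unfolding n_def k_def by simp
qed


lemma decomp_unique:
  assumes d: "is_decomp p f \<omega>' a \<omega> \<nu> w" and p: "0 < p" and f: "1 \<le> f"
  shows "\<omega> = omT f a \<omega>' \<and> \<nu> = nuT f a \<omega>' \<and> w = wwT f a \<omega>'"
proof -
  from d have W1: "(\<omega>, w) \<in> W1plus p f" and eq: "\<omega>' = wadd \<omega> \<nu>"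
    unfolding is_decomp_def by auto
  from W1 have omLW: "\<omega> \<in> LW f" and wW: "w \<in> Weyl f" unfolding W1plus_def by auto
  have om: "\<omega> = omT f a \<omega>'"
  proof (intro ext)
    fix k j
    show "\<omega> k j = omT f a \<omega>' k j"
    proof (cases "k < f \<and> j < 3")
      case True
      define i where "i = (k + f - 1) mod f"
      have i: "i < f" unfolding i_def using f by simp
      have ik: "(i + 1) mod f = k" unfolding i_def using idx2 f True by blast
      have "wsmul (-1) (piInv f \<omega>) i j = tabn (a k) (rT \<omega>' k) j"
        using classify_decomp[OF d p f i] True ik by auto
      then have e: "\<omega> k j = - tabn (a k) (rT \<omega>' k) j"
        using i ik by (simp add: wsmul_def piInv_def)
      show ?thesis
      proof (cases "j < 2")
        case True2: True
        then show ?thesis using e True by (simp add: omT_def)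
      next
        case False
        then have "j = 2" using True by auto
        then show ?thesis using omLW by (simp add: omT_def LW_def)
      qed
    next
      case False
      then have "\<omega> k j = 0" using omLW unfolding LW_def wf_def by auto
      then show ?thesis using False by (auto simp: omT_def)
    qed
  qed
  have ww: "w = wwT f a \<omega>'"
  proof (intro ext)
    fix i j
    show "w i j = wwT f a \<omega>' i j"
    proof (cases "i < f")
      case True
      then show ?thesis using classify_decomp[OF d p f True] by (simp add: wwT_def)
    next
      case False
      then show ?thesis using wW unfolding Weyl_def wwT_def by auto
    qed
  qed
  have nu: "\<nu> = nuT f a \<omega>'"
    unfolding nuT_def om[symmetric] using eq by (auto simp: wsub_def wadd_def)
  show ?thesis using om ww nu by simp
qed

lemma decomp_eq:
  assumes "0 < p" "1 \<le> f" "\<omega>' \<in> LW f"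
  shows "decomp p f \<omega>' a = (omT f a \<omega>', nuT f a \<omega>', wwT f a \<omega>')"
  unfolding decomp_def
proof (rule the_equality)
  show "case (omT f a \<omega>', nuT f a \<omega>', wwT f a \<omega>') of (\<omega>, \<nu>, w) \<Rightarrow> is_decomp p f \<omega>' a \<omega> \<nu> w"
    using explicit_decomp[OF assms(2,3)] by simp
  fix t assume "case t of (\<omega>, \<nu>, w) \<Rightarrow> is_decomp p f \<omega>' a \<omega> \<nu> w"
  then show "t = (omT f a \<omega>', nuT f a \<omega>', wwT f a \<omega>')"
    using decomp_unique[OF _ assms(1,2)] by (cases t) auto
qed


lemma sec_facts:
  assumes "is_section f sec" "\<omega> \<in> LW f"
  shows "wf f (sec \<omega>)" "\<And>k j. k < f \<Longrightarrow> j < 3 \<Longrightarrow> sec \<omega> k j = \<omega> k j + sec \<omega> k 2"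
proof -
  have s: "sec \<omega> \<in> Xstar f" "bar f (sec \<omega>) = \<omega>" using assms unfolding is_section_def by auto
  show "wf f (sec \<omega>)" using s(1) unfolding Xstar_def by simp
  fix k j :: nat assume "k < f" "j < 3"
  then have "bar f (sec \<omega>) k j = sec \<omega> k j - sec \<omega> k 2" unfolding bar_def by simp
  then show "sec \<omega> k j = \<omega> k j + sec \<omega> k 2" using s(2) by simp
qed

context
  fixes p f :: nat and \<mu> :: "int wt" and sec :: "int wt \<Rightarrow> int wt" and \<omega>' :: "int wt" and a :: "nat \<Rightarrow> alc"
  assumes p: "0 < p" and f: "1 \<le> f" and sec: "is_section f sec" and omLW: "\<omega>' \<in> LW f"
begin

abbreviation "om \<equiv> omT f a \<omega>'"
abbreviation "nu \<equiv> nuT f a \<omega>'"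
abbreviation "ww \<equiv> wwT f a \<omega>'"
abbreviation "cd i \<equiv> (nu i 0 + nu i 1 + nu i 2) div 3"
abbreviation "TT \<equiv> Trns' p f sec \<mu> \<omega>' a"

lemma T_eq: "TT = dot p f (wsmul (-1) (piInv f (sec om))) ww (wadd (wadd (wsub \<mu> (eta f)) (can f nu)) (sec om))"
  unfolding Trns'_def decomp_eq[OF p f omLW] by simp

lemma ww_lt: "i < f \<Longrightarrow> j < 3 \<Longrightarrow> ww i j < 3"
  by (simp add: wwT_def tabw_lt)

lemma T_val:
  assumes i: "i < f" and j: "j < 3"
  shows "TT i j = int p * (- om ((i+1) mod f) j - sec om ((i+1) mod f) 2)
     + (\<omega>' i (ww i j) + \<mu> i (ww i j) - eta f i (ww i j) - cd i + sec om i 2) + eta f i (ww i j) - eta f i j"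
proof -
  define k where "k = (i+1) mod f"
  define m where "m = ww i j"
  have k: "k < f" unfolding k_def using f by simp
  have m: "m < 3" unfolding m_def using ww_lt[OF i j] .
  have sk: "sec om k j = om k j + sec om k 2" using sec_facts(2)[OF sec omT_LW k j] .
  have si: "sec om i m = om i m + sec om i 2" using sec_facts(2)[OF sec omT_LW i m] .
  have nui: "nu i m = \<omega>' i m - om i m" by (simp add: nuT_def wsub_def)
  have tau: "wsmul (-1) (piInv f (sec om)) i j = - om k j - sec om k 2"
    using i sk unfolding k_def by (simp add: wsmul_def piInv_def)
  have X: "wadd (wadd (wsub \<mu> (eta f)) (can f nu)) (sec om) i m = \<omega>' i m + \<mu> i m - eta f i m - cd i + sec om i 2"
    using i m si nui by (simp add: wadd_def wsub_def can_def)
  show ?thesis unfolding T_eq using i j tau X[unfolded m_def] unfolding k_def[symmetric]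
    by (simp add: dot_def wact_def wadd_def)
qed

abbreviation "Y0 \<equiv> wadd \<omega>' (bar f (wsub \<mu> (eta f)))"
abbreviation "DD \<equiv> dot p f (wsmul (-1) (piInv f om)) ww Y0"

lemma D_val:
  assumes i: "i < f" and j: "j < 3"
  shows "DD i j = int p * (- om ((i+1) mod f) j)
     + (\<omega>' i (ww i j) + \<mu> i (ww i j) - eta f i (ww i j) - (\<mu> i 2 - eta f i 2)) + eta f i (ww i j) - eta f i j"
proof -
  have m: "ww i j < 3" using ww_lt[OF i j] .
  show ?thesis using i j m by (simp add: dot_def wact_def wadd_def wsmul_def piInv_def bar_def wsub_def)
qed

lemma samediff_TD: "samediff f TT DD"
  unfolding samediff_def
proof (intro allI impI)
  fix i j :: nat assume i: "i < f" and j: "j < 3"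
  have K: "TT i j - DD i j = int p * (- sec om ((i+1) mod f) 2) - cd i + sec om i 2 + \<mu> i 2 - eta f i 2"
    if "j < 3" for j
    unfolding T_val[OF i that] D_val[OF i that] by (simp add: algebra_simps)
  show "TT i j - DD i j = TT i 0 - DD i 0" using K[OF j] K[of 0] by simp
qed

lemma wf_dot: "wf f (dot p f \<nu> w x)" unfolding wf_def dot_def by auto

lemma TT_wf: "wf f TT" unfolding T_eq by (rule wf_dot)

lemma DD_alc:
  assumes "\<omega>' \<in> LWmu p f \<mu>"
  shows "in_alc p f (alc_piInv f a) DD"
  unfolding in_alc_iff
proof (intro allI impI)
  fix i assume i: "i < f"
  have g: "galc (int p) AlcA (wadd Y0 (eta f) i 0 - wadd Y0 (eta f) i 1) (wadd Y0 (eta f) i 1 - wadd Y0 (eta f) i 2)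
       (wadd Y0 (eta f) i 0 - wadd Y0 (eta f) i 2)"
    using assms i unfolding LWmu_def in_alc_iff by auto
  have "galc (int p) (a ((i+1) mod f)) (wadd DD (eta f) i 0 - wadd DD (eta f) i 1)
     (wadd DD (eta f) i 1 - wadd DD (eta f) i 2) (wadd DD (eta f) i 0 - wadd DD (eta f) i 2)"
    apply (rule map_int[OF i _ _ rT_range g])
    using tv_val[OF f i] apply blast
    using i by (simp add: wwT_def)
  then show "galc (of_nat p) (alc_piInv f a i) (wadd DD (eta f) i 0 - wadd DD (eta f) i 1)
     (wadd DD (eta f) i 1 - wadd DD (eta f) i 2) (wadd DD (eta f) i 0 - wadd DD (eta f) i 2)"
    using i by (simp add: alc_piInv_def)
qed

lemma TT_alc: "\<omega>' \<in> LWmu p f \<mu> \<Longrightarrow> in_alc p f (alc_piInv f a) TT"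
  using samediff_in_alc[OF samediff_TD] DD_alc by blast

lemma barT_alc: "\<omega>' \<in> LWmu p f \<mu> \<Longrightarrow> in_alc p f (alc_piInv f a) (bar f TT)"
  using samediff_in_alc[OF samediff_bar[of f TT]] TT_alc by blast

lemma barT_eq: "bar f TT = bar f DD"
  by (rule samediff_bar_eq[OF samediff_TD TT_wf wf_dot])

lemma part1_conv:
  assumes A: "a = (\<lambda>_. AlcA)" and h: "in_alc p f (\<lambda>_. AlcA) TT"
  shows "\<omega>' \<in> LWmu p f \<mu>"
proof -
  have hD: "in_alc p f (\<lambda>_. AlcA) DD" using h samediff_in_alc[OF samediff_TD] by blast
  have "in_alc p f (\<lambda>_. AlcA) Y0"
    unfolding in_alc_iff
  proof (intro allI impI)
    fix i assume i: "i < f"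
    have g: "galc (int p) AlcA (wadd DD (eta f) i 0 - wadd DD (eta f) i 1)
     (wadd DD (eta f) i 1 - wadd DD (eta f) i 2) (wadd DD (eta f) i 0 - wadd DD (eta f) i 2)"
      using hD i unfolding in_alc_iff by auto
    show "galc (of_nat p) AlcA (wadd Y0 (eta f) i 0 - wadd Y0 (eta f) i 1) (wadd Y0 (eta f) i 1 - wadd Y0 (eta f) i 2)
       (wadd Y0 (eta f) i 0 - wadd Y0 (eta f) i 2)"
      apply (rule inv_int[OF i _ _ rT_range[of \<omega>' "(i+1) mod f"] g])
      using tv_val[OF f i] A apply simp
      using i A by (simp add: wwT_def)
  qed
  then show ?thesis using omLW unfolding LWmu_def by simp
qed

lemma nu_sum3: "i < f \<Longrightarrow> 3 * cd i = nu i 0 + nu i 1 + nu i 2"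
  using nuT_LR[OF omLW, of a] unfolding LR_def by auto

lemma ww_eq: "i < f \<Longrightarrow> ww i = tabw (a ((i+1) mod f)) (rT \<omega>' ((i+1) mod f))"
  by (simp add: wwT_def)

lemma T_sum:
  assumes i: "i < f"
  shows "TT i 0 + TT i 1 + TT i 2 - (\<mu> i 0 + \<mu> i 1 + \<mu> i 2)
     = - int p * (sec om ((i+1) mod f) 0 + sec om ((i+1) mod f) 1 + sec om ((i+1) mod f) 2)
       + (sec om i 0 + sec om i 1 + sec om i 2)"
proof -
  define k where "k = (i+1) mod f"
  have k: "k < f" unfolding k_def using f by simp
  have t0: "TT i 0 = int p * (- om k 0 - sec om k 2)
     + (\<omega>' i (ww i 0) + \<mu> i (ww i 0) - eta f i (ww i 0) - cd i + sec om i 2) + eta f i (ww i 0) - eta f i 0"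
    using T_val[OF i, of 0] unfolding k_def by simp
  have t1: "TT i 1 = int p * (- om k 1 - sec om k 2)
     + (\<omega>' i (ww i 1) + \<mu> i (ww i 1) - eta f i (ww i 1) - cd i + sec om i 2) + eta f i (ww i 1) - eta f i 1"
    using T_val[OF i, of 1] unfolding k_def by simp
  have t2: "TT i 2 = int p * (- om k 2 - sec om k 2)
     + (\<omega>' i (ww i 2) + \<mu> i (ww i 2) - eta f i (ww i 2) - cd i + sec om i 2) + eta f i (ww i 2) - eta f i 2"
    using T_val[OF i, of 2] unfolding k_def by simp
  have sw1: "\<omega>' i (ww i 0) + \<omega>' i (ww i 1) + \<omega>' i (ww i 2) = \<omega>' i 0 + \<omega>' i 1 + \<omega>' i 2"
    unfolding ww_eq[OF i] by (rule tabw_sum)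
  have sw2: "\<mu> i (ww i 0) + \<mu> i (ww i 1) + \<mu> i (ww i 2) = \<mu> i 0 + \<mu> i 1 + \<mu> i 2"
    unfolding ww_eq[OF i] by (rule tabw_sum)
  have et: "eta f i 0 + eta f i 1 + eta f i 2 = (0::int)" by (simp add: eta_def)
  have pk: "int p * (- om k 0 - sec om k 2) + int p * (- om k 1 - sec om k 2) + int p * (- om k 2 - sec om k 2)
      = - int p * (sec om k 0 + sec om k 1 + sec om k 2)"
  proof -
    have "sec om k 0 = om k 0 + sec om k 2" "sec om k 1 = om k 1 + sec om k 2"
      using sec_facts(2)[OF sec omT_LW k, of 0] sec_facts(2)[OF sec omT_LW k, of 1] by simp_all
    moreover have "om k 2 = 0" by (simp add: omT_def)
    ultimately show ?thesis by (simp add: algebra_simps)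
  qed
  have si: "sec om i 0 = om i 0 + sec om i 2" "sec om i 1 = om i 1 + sec om i 2"
      using sec_facts(2)[OF sec omT_LW i, of 0] sec_facts(2)[OF sec omT_LW i, of 1] by simp_all
  have nus: "nu i j = \<omega>' i j - om i j" for j by (simp add: nuT_def wsub_def)
  have c3: "3 * cd i = nu i 0 + nu i 1 + nu i 2" by (rule nu_sum3[OF i])
  have "TT i 0 + TT i 1 + TT i 2 - (\<mu> i 0 + \<mu> i 1 + \<mu> i 2)
    = (int p * (- om k 0 - sec om k 2) + int p * (- om k 1 - sec om k 2) + int p * (- om k 2 - sec om k 2))
      + (\<omega>' i (ww i 0) + \<omega>' i (ww i 1) + \<omega>' i (ww i 2)) + (\<mu> i (ww i 0) + \<mu> i (ww i 1) + \<mu> i (ww i 2))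
      - 3 * cd i + 3 * sec om i 2 - (eta f i 0 + eta f i 1 + eta f i 2) - (\<mu> i 0 + \<mu> i 1 + \<mu> i 2)"
    unfolding t0 t1 t2 by (simp add: algebra_simps)
  also have "\<dots> = - int p * (sec om k 0 + sec om k 1 + sec om k 2)
      + (\<omega>' i 0 + \<omega>' i 1 + \<omega>' i 2) - (nu i 0 + nu i 1 + nu i 2) + 3 * sec om i 2"
    unfolding pk sw1 sw2 et c3 by simp
  also have "\<dots> = - int p * (sec om k 0 + sec om k 1 + sec om k 2) + (sec om i 0 + sec om i 1 + sec om i 2)"
    unfolding nus si by (simp add: omT_def)
  finally show ?thesis unfolding k_def .
qed

lemma part3:
  "resZ f (wadd (wsub TT \<mu>) (eta f)) = resZ f (wsub TT \<mu>)
   \<and> (\<exists>z::nat \<Rightarrow> int. (\<forall>i\<ge>f. z i = 0) \<and> resZ f (wsub TT \<mu>) = (\<lambda>i. int p * z i - piZ f z i))"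
proof
  show "resZ f (wadd (wsub TT \<mu>) (eta f)) = resZ f (wsub TT \<mu>)"
    by (auto simp: resZ_def wadd_def wsub_def eta_def)
  define S where "S k = sec om k 0 + sec om k 1 + sec om k 2" for k
  define z where "z i = (if i < f then - S ((i+1) mod f) else 0)" for i
  have "resZ f (wsub TT \<mu>) = (\<lambda>i. int p * z i - piZ f z i)"
  proof
    fix i
    show "resZ f (wsub TT \<mu>) i = int p * z i - piZ f z i"
    proof (cases "i < f")
      case True
      have r: "resZ f (wsub TT \<mu>) i = TT i 0 + TT i 1 + TT i 2 - (\<mu> i 0 + \<mu> i 1 + \<mu> i 2)"
        using True by (simp add: resZ_def wsub_def)
      have j: "(i + f - 1) mod f < f" using f by simp
      have pz: "piZ f z i = - S i"
        using True j idx2[OF f True] by (simp add: piZ_def z_def)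
      show ?thesis unfolding r T_sum[OF True] pz using True by (simp add: z_def S_def algebra_simps)
    next
      case False
      then show ?thesis by (simp add: resZ_def piZ_def z_def)
    qed
  qed
  moreover have "\<forall>i\<ge>f. z i = 0" by (simp add: z_def)
  ultimately show "\<exists>z::nat \<Rightarrow> int. (\<forall>i\<ge>f. z i = 0) \<and> resZ f (wsub TT \<mu>) = (\<lambda>i. int p * z i - piZ f z i)"
    by blast
qed

lemma part2_cong:
  "\<exists>\<nu>\<in>LR f. \<exists>w\<in>Weyl f. cong_ppi p f TT
      (dot p f (can f \<nu>) w (wadd (wsub \<mu> (eta f)) (wsub (sec \<omega>') (wsmul (int p) (piInv f (sec \<omega>'))))))"
proof -
  define q :: "int wt" where "q i j = (if i < f \<and> j < 3 then \<omega>' ((i+1) mod f) (ww i j) - om ((i+1) mod f) j else 0)" for i j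
  define \<nu>2 where "\<nu>2 = bar f q"
  define c where "c k = cd k - sec om k 2 + sec \<omega>' k 2" for k
  define g :: "int wt" where "g i j = (if i < f \<and> j < 3 then c ((i+1) mod f) else (0::int))" for i j
  define X' where "X' = wadd (wsub \<mu> (eta f)) (wsub (sec \<omega>') (wsmul (int p) (piInv f (sec \<omega>'))))"
  define R where "R = dot p f (can f \<nu>2) ww X'"
  have nus: "nu i j = \<omega>' i j - om i j" for i j by (simp add: nuT_def wsub_def)
  have Q2: "q i 0 + q i 1 + q i 2 = 3 * cd ((i+1) mod f)" if i: "i < f" for i
  proof -
    define k where "k = (i+1) mod f"
    have k: "k < f" unfolding k_def using f by simp
    have "\<omega>' k (ww i 0) + \<omega>' k (ww i 1) + \<omega>' k (ww i 2) = \<omega>' k 0 + \<omega>' k 1 + \<omega>' k 2"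
      unfolding ww_eq[OF i] by (rule tabw_sum)
    then have "q i 0 + q i 1 + q i 2 = nu k 0 + nu k 1 + nu k 2"
      using i unfolding q_def nus k_def by simp
    then show ?thesis using nu_sum3[OF k] unfolding k_def by simp
  qed
  have bsum: "\<nu>2 i 0 + \<nu>2 i 1 + \<nu>2 i 2 = 3 * (cd ((i+1) mod f) - q i 2)" if i: "i < f" for i
    using Q2[OF i] i unfolding \<nu>2_def by (simp add: bar_def algebra_simps)
  have CAN: "can f \<nu>2 i j = q i j - cd ((i+1) mod f)" if i: "i < f" and j: "j < 3" for i j
  proof -
    have "can f \<nu>2 i j = \<nu>2 i j - (\<nu>2 i 0 + \<nu>2 i 1 + \<nu>2 i 2) div 3"
      using i j by (simp add: can_def)
    also have "\<dots> = \<nu>2 i j - (cd ((i+1) mod f) - q i 2)" unfolding bsum[OF i] by simp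
    also have "\<dots> = q i j - cd ((i+1) mod f)" using i j unfolding \<nu>2_def by (simp add: bar_def)
    finally show ?thesis .
  qed
  have nuLR: "\<nu>2 \<in> LR f"
  proof -
    have "\<nu>2 \<in> LW f" unfolding \<nu>2_def LW_def wf_def bar_def by auto
    moreover have "3 dvd (\<nu>2 i 0 + \<nu>2 i 1 + \<nu>2 i 2)" if "i < f" for i
      unfolding bsum[OF that] by simp
    ultimately show ?thesis unfolding LR_def by auto
  qed
  have sw: "wf f (sec \<omega>')" using sec_facts(1)[OF sec omLW] .
  have RV: "R i j = int p * (q i j - cd ((i+1) mod f)) + (\<mu> i (ww i j) - eta f i (ww i j) + \<omega>' i (ww i j) + sec \<omega>' i 2
        - int p * (\<omega>' ((i+1) mod f) (ww i j) + sec \<omega>' ((i+1) mod f) 2)) + eta f i (ww i j) - eta f i j"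
    if i: "i < f" and j: "j < 3" for i j
  proof -
    define k where "k = (i+1) mod f"
    define m where "m = ww i j"
    have k: "k < f" unfolding k_def using f by simp
    have m: "m < 3" unfolding m_def using ww_lt[OF i j] .
    have s1: "sec \<omega>' i m = \<omega>' i m + sec \<omega>' i 2" using sec_facts(2)[OF sec omLW i m] .
    have s2: "sec \<omega>' k m = \<omega>' k m + sec \<omega>' k 2" using sec_facts(2)[OF sec omLW k m] .
    have Xm: "X' i m = \<mu> i m - eta f i m + \<omega>' i m + sec \<omega>' i 2 - int p * (\<omega>' k m + sec \<omega>' k 2)"
      using i s1 s2 unfolding X'_def k_def by (simp add: wadd_def wsub_def wsmul_def piInv_def)
    show ?thesis unfolding R_def using i j CAN[OF i j] Xm[unfolded m_def k_def]
      by (simp add: dot_def wact_def wadd_def)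
  qed
  have DIFF: "TT i j - R i j = int p * c ((i+1) mod f) - c i" if i: "i < f" and j: "j < 3" for i j
  proof -
    have qv: "q i j = \<omega>' ((i+1) mod f) (ww i j) - om ((i+1) mod f) j" using i j by (simp add: q_def)
    show ?thesis unfolding T_val[OF i j] RV[OF i j] qv c_def by (simp add: algebra_simps)
  qed
  have gX0: "g \<in> X0 f" unfolding X0_def wf_def g_def by auto
  have EQ: "wsub TT R = wsub (wsmul (int p) g) (piF f g)"
  proof (intro ext)
    fix i j
    show "wsub TT R i j = wsub (wsmul (int p) g) (piF f g) i j"
    proof (cases "i < f \<and> j < 3")
      case True
      then have i: "i < f" and j: "j < 3" by auto
      have jj: "(i + f - 1) mod f < f" using f by simp
      have "piF f g i j = c i" using i j jj idx2[OF f i] by (simp add: piF_def g_def)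
      then show ?thesis using DIFF[OF i j] i j by (simp add: wsub_def wsmul_def g_def)
    next
      case False
      have "TT i j = 0" using TT_wf False unfolding wf_def by auto
      moreover have "R i j = 0" using wf_dot[of "can f \<nu>2" ww X'] False unfolding R_def wf_def by auto
      moreover have "g i j = 0" "piF f g i j = 0" using False by (auto simp: g_def piF_def)
      ultimately show ?thesis by (simp add: wsub_def wsmul_def)
    qed
  qed
  have "cong_ppi p f TT R" unfolding cong_ppi_def using gX0 EQ by blast
  then show ?thesis using nuLR wwT_Weyl unfolding R_def X'_def by blast
qed

end

theorem proposition2p4:
  fixes p f :: nat and \<mu> :: "int wt" and sec :: "int wt \<Rightarrow> int wt"
  assumes "prime p" and "1 \<le> f" and "\<mu> \<in> Xstar f" and "is_section f sec"
  shows
    "((\<forall>\<omega>'\<in>LW f. \<omega>' \<in> LWmu p f \<mu> \<longleftrightarrow>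
        (\<exists>y\<in>Xstar f. in_C0 p f y \<and> cong_ppi p f (Trns' p f sec \<mu> \<omega>' (\<lambda>_. AlcA)) y))
     \<and> (\<forall>\<omega>'\<in>LWmu p f \<mu>. p_regular p f (Trns' p f sec \<mu> \<omega>' (\<lambda>_. AlcA))))
   \<and> (\<forall>a\<in>calA f. \<forall>\<omega>'\<in>LWmu p f \<mu>.
        p_regular p f (bar f (Trns' p f sec \<mu> \<omega>' a))
      \<and> (\<exists>\<nu>\<in>LW f. \<exists>w\<in>Weyl f. bar f (Trns' p f sec \<mu> \<omega>' a)
            = bar f (dot p f \<nu> w (wadd \<omega>' (bar f (wsub \<mu> (eta f))))))
      \<and> in_alc p f (alc_piInv f a) (bar f (Trns' p f sec \<mu> \<omega>' a))
      \<and> (\<exists>\<nu>\<in>LR f. \<exists>w\<in>Weyl f. cong_ppi p f (Trns' p f sec \<mu> \<omega>' a)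
            (dot p f (can f \<nu>) w
               (wadd (wsub \<mu> (eta f)) (wsub (sec \<omega>') (wsmul (int p) (piInv f (sec \<omega>'))))))))
   \<and> (\<forall>a\<in>calA f. \<forall>\<omega>'\<in>LWmu p f \<mu>.
        resZ f (wadd (wsub (Trns' p f sec \<mu> \<omega>' a) \<mu>) (eta f))
          = resZ f (wsub (Trns' p f sec \<mu> \<omega>' a) \<mu>)
      \<and> (\<exists>z::nat \<Rightarrow> int. (\<forall>i\<ge>f. z i = 0) \<and>
            resZ f (wsub (Trns' p f sec \<mu> \<omega>' a) \<mu>) = (\<lambda>i. int p * z i - piZ f z i)))"
proof -
  have p: "0 < p" using assms(1) by (simp add: prime_gt_0_nat)
  note f = assms(2) and sec = assms(4)
  have piA: "alc_piInv f (\<lambda>_. AlcA) = (\<lambda>_. AlcA)" by (auto simp: alc_piInv_def)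
  have P1a: "\<forall>\<omega>'\<in>LW f. \<omega>' \<in> LWmu p f \<mu> \<longleftrightarrow>
        (\<exists>y\<in>Xstar f. in_C0 p f y \<and> cong_ppi p f (Trns' p f sec \<mu> \<omega>' (\<lambda>_. AlcA)) y)"
  proof (intro ballI iffI)
    fix \<omega>' assume om: "\<omega>' \<in> LW f" and mu: "\<omega>' \<in> LWmu p f \<mu>"
    let ?T = "Trns' p f sec \<mu> \<omega>' (\<lambda>_. AlcA)"
    have "in_C0 p f ?T" using TT_alc[OF p f sec om mu, where a="\<lambda>_. AlcA"] piA unfolding in_C0_def by simp
    moreover have "?T \<in> Xstar f" using TT_wf[OF p f sec om] unfolding Xstar_def by simp
    moreover have "cong_ppi p f ?T ?T"
    proof -
      have "(\<lambda>i j. 0::int) \<in> X0 f" unfolding X0_def wf_def by simp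
      moreover have "wsub ?T ?T = wsub (wsmul (int p) (\<lambda>i j. 0::int)) (piF f (\<lambda>i j. 0::int))"
        by (simp add: wsub_def wsmul_def piF_def fun_eq_iff)
      ultimately show ?thesis unfolding cong_ppi_def by blast
    qed
    ultimately show "\<exists>y\<in>Xstar f. in_C0 p f y \<and> cong_ppi p f ?T y" by blast
  next
    fix \<omega>' assume om: "\<omega>' \<in> LW f" and h: "\<exists>y\<in>Xstar f. in_C0 p f y \<and> cong_ppi p f (Trns' p f sec \<mu> \<omega>' (\<lambda>_. AlcA)) y"
    then obtain y where y: "in_C0 p f y" "cong_ppi p f (Trns' p f sec \<mu> \<omega>' (\<lambda>_. AlcA)) y" by blast
    have "in_alc p f (\<lambda>_. AlcA) (Trns' p f sec \<mu> \<omega>' (\<lambda>_. AlcA))"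
      using samediff_in_alc[OF cong_samediff[OF y(2)]] y(1) unfolding in_C0_def by blast
    then show "\<omega>' \<in> LWmu p f \<mu>" using part1_conv[OF p f sec om refl] by blast
  qed
  have P1b: "\<forall>\<omega>'\<in>LWmu p f \<mu>. p_regular p f (Trns' p f sec \<mu> \<omega>' (\<lambda>_. AlcA))"
  proof
    fix \<omega>' assume mu: "\<omega>' \<in> LWmu p f \<mu>"
    then have om: "\<omega>' \<in> LW f" unfolding LWmu_def by simp
    show "p_regular p f (Trns' p f sec \<mu> \<omega>' (\<lambda>_. AlcA))"
      using in_alc_preg TT_alc[OF p f sec om mu] by blast
  qed
  have P2: "\<forall>a\<in>calA f. \<forall>\<omega>'\<in>LWmu p f \<mu>.
        p_regular p f (bar f (Trns' p f sec \<mu> \<omega>' a))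
      \<and> (\<exists>\<nu>\<in>LW f. \<exists>w\<in>Weyl f. bar f (Trns' p f sec \<mu> \<omega>' a)
            = bar f (dot p f \<nu> w (wadd \<omega>' (bar f (wsub \<mu> (eta f))))))
      \<and> in_alc p f (alc_piInv f a) (bar f (Trns' p f sec \<mu> \<omega>' a))
      \<and> (\<exists>\<nu>\<in>LR f. \<exists>w\<in>Weyl f. cong_ppi p f (Trns' p f sec \<mu> \<omega>' a)
            (dot p f (can f \<nu>) w
               (wadd (wsub \<mu> (eta f)) (wsub (sec \<omega>') (wsmul (int p) (piInv f (sec \<omega>')))))))"
  proof (intro ballI conjI)
    fix a \<omega>' assume a: "a \<in> calA f" and mu: "\<omega>' \<in> LWmu p f \<mu>"
    then have om: "\<omega>' \<in> LW f" unfolding LWmu_def by simp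
    show "p_regular p f (bar f (Trns' p f sec \<mu> \<omega>' a))"
      using in_alc_preg barT_alc[OF p f sec om mu] by blast
    show "in_alc p f (alc_piInv f a) (bar f (Trns' p f sec \<mu> \<omega>' a))"
      using barT_alc[OF p f sec om mu] .
    have nLW: "wsmul (-1) (piInv f (omT f a \<omega>')) \<in> LW f"
      unfolding LW_def wf_def wsmul_def piInv_def omT_def by auto
    show "\<exists>\<nu>\<in>LW f. \<exists>w\<in>Weyl f. bar f (Trns' p f sec \<mu> \<omega>' a)
            = bar f (dot p f \<nu> w (wadd \<omega>' (bar f (wsub \<mu> (eta f)))))"
      using barT_eq[OF p f sec om] nLW wwT_Weyl by blast
    show "\<exists>\<nu>\<in>LR f. \<exists>w\<in>Weyl f. cong_ppi p f (Trns' p f sec \<mu> \<omega>' a)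
            (dot p f (can f \<nu>) w
               (wadd (wsub \<mu> (eta f)) (wsub (sec \<omega>') (wsmul (int p) (piInv f (sec \<omega>'))))))"
      using part2_cong[OF p f sec om] .
  qed
  have P3: "\<forall>a\<in>calA f. \<forall>\<omega>'\<in>LWmu p f \<mu>.
        resZ f (wadd (wsub (Trns' p f sec \<mu> \<omega>' a) \<mu>) (eta f))
          = resZ f (wsub (Trns' p f sec \<mu> \<omega>' a) \<mu>)
      \<and> (\<exists>z::nat \<Rightarrow> int. (\<forall>i\<ge>f. z i = 0) \<and>
            resZ f (wsub (Trns' p f sec \<mu> \<omega>' a) \<mu>) = (\<lambda>i. int p * z i - piZ f z i))"
  proof (intro ballI)
    fix a \<omega>' assume a: "a \<in> calA f" and mu: "\<omega>' \<in> LWmu p f \<mu>"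
    then have om: "\<omega>' \<in> LW f" unfolding LWmu_def by simp
    show "resZ f (wadd (wsub (Trns' p f sec \<mu> \<omega>' a) \<mu>) (eta f))
          = resZ f (wsub (Trns' p f sec \<mu> \<omega>' a) \<mu>)
      \<and> (\<exists>z::nat \<Rightarrow> int. (\<forall>i\<ge>f. z i = 0) \<and>
            resZ f (wsub (Trns' p f sec \<mu> \<omega>' a) \<mu>) = (\<lambda>i. int p * z i - piZ f z i))"
      using part3[OF p f sec om] .
  qed
  show ?thesis using P1a P1b P2 P3 by blast
qed

end
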